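(* Let $H$ and $K$ be finite groups such that at least one of them is solvable. Then $\mathrm{MaxDim}(H \times K) = \mathrm{MaxDim}(H) + \mathrm{MaxDim}(K)$.
   Context: All groups are finite. A finite set $\{H_1,\dots,H_n\}$ of subgroups of a group $G$ is in general position if for every $1 \le j \le n$, $\bigcap_{i \neq j} H_i \supsetneq \bigcap_{i} H_i$. $\mathrm{MaxDim}(G)$ is the largest cardinality of a collection of maximal subgroups of $G$ that is in general position. *)

theory Defs
  imports "HOL-Algebra.Solvable_Groups"
begin

definition maximal_subgroup :: "'a set \<Rightarrow> ('a, 'b) monoid_scheme \<Rightarrow> bool" where
  "maximal_subgroup M G \<longleftrightarrow> subgroup M G \<and> M \<noteq> carrier G \<and>
     (\<forall>H. subgroup H G \<and> M \<subseteq> H \<longrightarrow> H = M \<or> H = carrier G)"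

text \<open>Intersections are taken inside carrier G, so that the
  intersection of the empty family is G itself.\<close>
definition general_position :: "('a, 'b) monoid_scheme \<Rightarrow> 'a set set \<Rightarrow> bool" where
  "general_position G S \<longleftrightarrow> finite S \<and>
     (\<forall>H\<in>S. carrier G \<inter> \<Inter>(S - {H}) \<supset> carrier G \<inter> \<Inter>S)"

definition MaxDim :: "('a, 'b) monoid_scheme \<Rightarrow> nat" where
  "MaxDim G = Max {card S | S. (\<forall>M\<in>S. maximal_subgroup M G) \<and> general_position G S}"

end

theory Submission
  imports Defs "HOL-Algebra.SndIsomorphismGrp"
begin


lemma (in group) solv_maxnormal_comm:
  assumes solv: "solvable G" and N: "N \<lhd> G" and nprop: "N \<noteq> carrier G"
    and nmax: "\<And>N'. N' \<lhd> G \<Longrightarrow> N \<subseteq> N' \<Longrightarrow> N' = N \<or> N' = carrier G"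
  shows "derived G (carrier G) \<subseteq> N"
proof -
  interpret N: normal N G by fact
  let ?Q = "G Mod N"
  let ?f = "\<lambda>a. N #> a"
  have Qg: "group ?Q" using N.factorgroup_is_group .
  have hom: "group_hom G ?Q ?f"
    unfolding group_hom_def group_hom_axioms_def using N.r_coset_hom_Mod Qg is_group by blast
  have surj: "?f ` carrier G = carrier ?Q" by (auto simp: FactGroup_def RCOSETS_def)
  let ?E = "derived ?Q (carrier ?Q)"
  have img: "?E = ?f ` derived G (carrier G)"
    using group_hom.derived_img[OF hom, of "carrier G"] surj by simp
  have En: "?E \<lhd> ?Q" using group.derived_self_is_normal[OF Qg] .
  define P where "P = {x\<in>carrier G. ?f x \<in> ?E}"
  have fone: "?f \<one> = \<one>\<^bsub>?Q\<^esub>" using group_hom.hom_one[OF hom] .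
  have fmult: "\<And>x y. x \<in> carrier G \<Longrightarrow> y \<in> carrier G \<Longrightarrow> ?f (x \<otimes> y) = ?f x \<otimes>\<^bsub>?Q\<^esub> ?f y"
    using group_hom.hom_mult[OF hom] by blast
  have finv: "\<And>x. x \<in> carrier G \<Longrightarrow> ?f (inv x) = inv\<^bsub>?Q\<^esub> ?f x"
    using group_hom.hom_inv[OF hom] by blast
  have fc: "\<And>x. x \<in> carrier G \<Longrightarrow> ?f x \<in> carrier ?Q" using surj by blast
  have Esub: "subgroup ?E ?Q" using normal.axioms(1)[OF En] .
  have Psub: "subgroup P G"
  proof
    show "P \<subseteq> carrier G" unfolding P_def by blast
    have "?f \<one> \<in> ?E" by (subst fone) (rule subgroup.one_closed[OF Esub])
    then show "\<one> \<in> P" unfolding P_def by simp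
    fix x y assume "x \<in> P" "y \<in> P"
    then have "x \<in> carrier G" "y \<in> carrier G" "?f x \<in> ?E" "?f y \<in> ?E" unfolding P_def by auto
    then have "?f (x \<otimes> y) \<in> ?E" proof -
      have "?f x \<otimes>\<^bsub>?Q\<^esub> ?f y \<in> ?E" by (rule subgroup.m_closed[OF Esub]) fact+
      then show ?thesis using \<open>x \<in> carrier G\<close> \<open>y \<in> carrier G\<close> by (subst fmult) assumption+
    qed
    then show "x \<otimes> y \<in> P" unfolding P_def using \<open>x \<in> carrier G\<close> \<open>y \<in> carrier G\<close> by simp
  next
    fix x assume "x \<in> P"
    then have "x \<in> carrier G" "?f x \<in> ?E" unfolding P_def by auto
    then have "?f (inv x) \<in> ?E" proof -
      have "inv\<^bsub>?Q\<^esub> ?f x \<in> ?E" by (rule subgroup.m_inv_closed[OF Esub]) fact+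
      then show ?thesis using \<open>x \<in> carrier G\<close> by (subst finv) assumption+
    qed
    then show "inv x \<in> P" unfolding P_def using \<open>x \<in> carrier G\<close> by simp
  qed
  have Pn: "P \<lhd> G"
  proof (subst normal_inv_iff, intro conjI Psub ballI)
    fix x h assume x: "x \<in> carrier G" and h: "h \<in> P"
    have hc: "h \<in> carrier G" and hE: "?f h \<in> ?E" using h unfolding P_def by auto
    have "?f (x \<otimes> h \<otimes> inv x) = ?f x \<otimes>\<^bsub>?Q\<^esub> ?f h \<otimes>\<^bsub>?Q\<^esub> inv\<^bsub>?Q\<^esub> ?f x"
      using fmult finv x hc by simp
    also have "\<dots> \<in> ?E" using group.normal_inv_iff[OF Qg] En hE fc x by blast
    finally show "x \<otimes> h \<otimes> inv x \<in> P" unfolding P_def using x hc by simp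
  qed
  have NP: "N \<subseteq> P"
  proof
    fix x assume x: "x \<in> N"
    then have "?f x = N" using N.rcos_const is_group by blast
    moreover have "N = \<one>\<^bsub>?Q\<^esub>" by (simp add: FactGroup_def)
    ultimately have "?f x \<in> ?E" using subgroup.one_closed[OF Esub] by simp
    then show "x \<in> P" unfolding P_def using x N.subset by auto
  qed
  from nmax[OF Pn NP] show ?thesis
  proof
    assume "P = N"
    show ?thesis
    proof
      fix x assume x: "x \<in> derived G (carrier G)"
      then have "x \<in> carrier G" using derived_in_carrier by blast
      moreover have "?f x \<in> ?E" using img x by blast
      ultimately show "x \<in> N" using \<open>P = N\<close> unfolding P_def by blast
    qed
  next
    assume "P = carrier G"
    have "carrier ?Q \<subseteq> ?E"
    proof
      fix q assume "q \<in> carrier ?Q"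
      then obtain x where x: "x \<in> carrier G" "q = ?f x" using surj by (metis imageE)
      then have "x \<in> P" using \<open>P = carrier G\<close> by simp
      then show "q \<in> ?E" unfolding P_def using x by simp
    qed
    then have Ec: "?E = carrier ?Q" using subgroup.subset[OF Esub] by (rule equalityI[rotated])
    have all: "(derived ?Q ^^ n) (carrier ?Q) = carrier ?Q" for n
    proof (induct n)
      case 0 show ?case by simp
    next
      case (Suc n) then show ?case using Ec by (simp only: funpow.simps o_apply)
    qed
    obtain n where n: "(derived G ^^ n) (carrier G) = {\<one>}"
      using solv solvable_iff_trivial_derived_seq by blast
    have "carrier ?Q = (derived ?Q ^^ n) (?f ` carrier G)" by (simp only: surj all)
    also have "\<dots> = ?f ` ((derived G ^^ n) (carrier G))"
      by (rule group_hom.exp_of_derived_img[OF hom]) simp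
    also have "\<dots> = ?f ` {\<one>}" by (simp only: n)
    finally have "carrier ?Q = ?f ` {\<one>}" .
    then have Q1: "carrier ?Q = {N}" using N.rcos_const is_group N.one_closed by simp
    have "carrier G \<subseteq> N"
    proof
      fix x assume x: "x \<in> carrier G"
      then have "?f x = N" using fc Q1 by blast
      then show "x \<in> N" using rcos_self[OF x N.subgroup_axioms] by simp
    qed
    then show ?thesis using nprop N.subset by blast
  qed
qed



lemma times_cancel2: "A \<times> C = B \<times> C \<Longrightarrow> c \<in> C \<Longrightarrow> A = B"
  by (auto simp: set_eq_iff)
lemma times_cancel1: "C \<times> A = C \<times> B \<Longrightarrow> c \<in> C \<Longrightarrow> A = B"
  by (auto simp: set_eq_iff)

lemma psub_aux: "B = A \<inter> X \<Longrightarrow> (A \<supset> B) \<longleftrightarrow> \<not> A \<subseteq> X"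
  by blast

lemma gp_iff:
  assumes "finite S"
  shows "general_position G S \<longleftrightarrow> (\<forall>X\<in>S. \<not> (carrier G \<inter> \<Inter>(S - {X}) \<subseteq> X))"
proof -
  have "\<And>X. X \<in> S \<Longrightarrow> carrier G \<inter> \<Inter>S = (carrier G \<inter> \<Inter>(S - {X})) \<inter> X" by blast
  then have "\<And>X. X \<in> S \<Longrightarrow> (carrier G \<inter> \<Inter>(S - {X}) \<supset> carrier G \<inter> \<Inter>S) \<longleftrightarrow> \<not> (carrier G \<inter> \<Inter>(S - {X}) \<subseteq> X)"
    by (rule psub_aux)
  then show ?thesis using assms unfolding general_position_def by (meson ball_cong)
qed

lemma gp_empty: "general_position G {}"
  unfolding general_position_def by simp

lemma MaxDim_finite:
  "finite (carrier G) \<Longrightarrow> finite {card S | S. (\<forall>M\<in>S. maximal_subgroup M G) \<and> general_position G S}"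
proof -
  assume f: "finite (carrier G)"
  have "{card S | S. (\<forall>M\<in>S. maximal_subgroup M G) \<and> general_position G S} \<subseteq> card ` Pow (Pow (carrier G))"
  proof
    fix x assume "x \<in> {card S | S. (\<forall>M\<in>S. maximal_subgroup M G) \<and> general_position G S}"
    then obtain S where "x = card S" "\<forall>M\<in>S. maximal_subgroup M G" by blast
    then have "S \<in> Pow (Pow (carrier G))"
      unfolding maximal_subgroup_def using subgroup.subset by blast
    then show "x \<in> card ` Pow (Pow (carrier G))" using \<open>x = card S\<close> by blast
  qed
  then show ?thesis using f finite_subset by blast
qed

lemma MaxDim_ge:
  assumes "finite (carrier G)" "\<forall>M\<in>S. maximal_subgroup M G" "general_position G S"
  shows "card S \<le> MaxDim G"
  unfolding MaxDim_def using MaxDim_finite[OF assms(1)] assms(2,3) by (intro Max_ge) auto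

lemma MaxDim_attained:
  assumes "finite (carrier G)"
  obtains S where "\<forall>M\<in>S. maximal_subgroup M G" "general_position G S" "card S = MaxDim G"
proof -
  have ne: "{card S | S. (\<forall>M\<in>S. maximal_subgroup M G) \<and> general_position G S} \<noteq> {}"
    using gp_empty by blast
  have "MaxDim G \<in> {card S | S. (\<forall>M\<in>S. maximal_subgroup M G) \<and> general_position G S}"
    unfolding MaxDim_def using Max_in[OF MaxDim_finite[OF assms] ne] .
  then show ?thesis using that by auto
qed

locale prod2 = H: group H + K: group K
  for H :: "('a, 'c) monoid_scheme" and K :: "('b, 'd) monoid_scheme"
begin

abbreviation "G \<equiv> H \<times>\<times> K"

lemma Ggrp: "group G" using DirProd_group H.is_group K.is_group by blast

lemma invG[simp]: "x \<in> carrier H \<Longrightarrow> y \<in> carrier K \<Longrightarrow> inv\<^bsub>G\<^esub> (x, y) = (inv\<^bsub>H\<^esub> x, inv\<^bsub>K\<^esub> y)"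
  by (rule inv_DirProd[OF H.is_group K.is_group])

definition aa :: "('a \<times> 'b) set \<Rightarrow> 'a set" where
  "aa M = {h \<in> carrier H. (h, \<one>\<^bsub>K\<^esub>) \<in> M}"
definition bb :: "('a \<times> 'b) set \<Rightarrow> 'b set" where
  "bb M = {k \<in> carrier K. (\<one>\<^bsub>H\<^esub>, k) \<in> M}"
definition typeA :: "('a \<times> 'b) set \<Rightarrow> bool" where
  "typeA M \<longleftrightarrow> (\<forall>k\<in>carrier K. (\<one>\<^bsub>H\<^esub>, k) \<in> M)"
definition typeB :: "('a \<times> 'b) set \<Rightarrow> bool" where
  "typeB M \<longleftrightarrow> (\<forall>h\<in>carrier H. (h, \<one>\<^bsub>K\<^esub>) \<in> M)"

lemma aa_sub: assumes "subgroup M G" shows "subgroup (aa M) H"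
proof -
  interpret M: subgroup M G by fact
  show ?thesis
  proof
    show "aa M \<subseteq> carrier H" unfolding aa_def by blast
    show "\<one>\<^bsub>H\<^esub> \<in> aa M" unfolding aa_def using M.one_closed by simp
  next
    fix x y assume "x \<in> aa M" "y \<in> aa M"
    then show "x \<otimes>\<^bsub>H\<^esub> y \<in> aa M" unfolding aa_def using M.m_closed[of "(x, \<one>\<^bsub>K\<^esub>)" "(y, \<one>\<^bsub>K\<^esub>)"] by auto
  next
    fix x assume "x \<in> aa M"
    then show "inv\<^bsub>H\<^esub> x \<in> aa M" unfolding aa_def using M.m_inv_closed[of "(x, \<one>\<^bsub>K\<^esub>)"] by auto
  qed
qed

lemma bb_sub: assumes "subgroup M G" shows "subgroup (bb M) K"
proof -
  interpret M: subgroup M G by fact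
  show ?thesis
  proof
    show "bb M \<subseteq> carrier K" unfolding bb_def by blast
    show "\<one>\<^bsub>K\<^esub> \<in> bb M" unfolding bb_def using M.one_closed by simp
  next
    fix x y assume "x \<in> bb M" "y \<in> bb M"
    then show "x \<otimes>\<^bsub>K\<^esub> y \<in> bb M" unfolding bb_def using M.m_closed[of "(\<one>\<^bsub>H\<^esub>, x)" "(\<one>\<^bsub>H\<^esub>, y)"] by auto
  next
    fix x assume "x \<in> bb M"
    then show "inv\<^bsub>K\<^esub> x \<in> bb M" unfolding bb_def using M.m_inv_closed[of "(\<one>\<^bsub>H\<^esub>, x)"] by auto
  qed
qed

lemma subA: "subgroup A H \<Longrightarrow> subgroup (A \<times> carrier K) G"
  using DirProd_subgroups H.is_group K.is_group K.subgroup_self by blast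
lemma subB: "subgroup B K \<Longrightarrow> subgroup (carrier H \<times> B) G"
  using DirProd_subgroups H.is_group K.is_group H.subgroup_self by blast

lemma maxA:
  assumes "maximal_subgroup A H"
  shows "maximal_subgroup (A \<times> carrier K) G"
proof -
  have sA: "subgroup A H" and nA: "A \<noteq> carrier H"
    and mA: "\<And>X. subgroup X H \<Longrightarrow> A \<subseteq> X \<Longrightarrow> X = A \<or> X = carrier H"
    using assms unfolding maximal_subgroup_def by auto
  have Asub: "A \<subseteq> carrier H" using sA subgroup.subset by blast
  show ?thesis unfolding maximal_subgroup_def
  proof (intro conjI allI impI)
    show "subgroup (A \<times> carrier K) G" using subA[OF sA] .
    show "A \<times> carrier K \<noteq> carrier G" using nA Asub K.one_closed by auto
    fix X assume X: "subgroup X G \<and> A \<times> carrier K \<subseteq> X"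
    interpret X: subgroup X G using X by blast
    have "A \<subseteq> aa X" unfolding aa_def using X Asub K.one_closed by auto
    from mA[OF aa_sub[OF X.subgroup_axioms] this]
    show "X = A \<times> carrier K \<or> X = carrier G"
    proof
      assume e: "aa X = A"
      have "X \<subseteq> A \<times> carrier K"
      proof
        fix x assume x: "x \<in> X"
        obtain h k where hk: "x = (h, k)" by (cases x)
        have hc: "h \<in> carrier H" and kc: "k \<in> carrier K" using x hk X.subset by auto
        have "(\<one>\<^bsub>H\<^esub>, inv\<^bsub>K\<^esub> k) \<in> X" using X kc subgroup.one_closed[OF sA] by auto
        then have "(h, k) \<otimes>\<^bsub>G\<^esub> (\<one>\<^bsub>H\<^esub>, inv\<^bsub>K\<^esub> k) \<in> X" using x hk X.m_closed by blast
        then have "(h, \<one>\<^bsub>K\<^esub>) \<in> X" using hc kc by simp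
        then have "h \<in> A" using e hc unfolding aa_def by blast
        then show "x \<in> A \<times> carrier K" using hk kc by simp
      qed
      then show ?thesis using X by blast
    next
      assume e: "aa X = carrier H"
      have "carrier G \<subseteq> X"
      proof
        fix x assume x: "x \<in> carrier G"
        obtain h k where hk: "x = (h, k)" by (cases x)
        have hc: "h \<in> carrier H" and kc: "k \<in> carrier K" using x hk by auto
        have "(h, \<one>\<^bsub>K\<^esub>) \<in> X" using e hc unfolding aa_def by blast
        moreover have "(\<one>\<^bsub>H\<^esub>, k) \<in> X" using X kc sA subgroup.one_closed by fastforce
        ultimately have "(h, \<one>\<^bsub>K\<^esub>) \<otimes>\<^bsub>G\<^esub> (\<one>\<^bsub>H\<^esub>, k) \<in> X" using X.m_closed by blast
        then show "x \<in> X" using hc kc hk by simp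
      qed
      then show ?thesis using X.subset by blast
    qed
  qed
qed

lemma maxB:
  assumes "maximal_subgroup B K"
  shows "maximal_subgroup (carrier H \<times> B) G"
proof -
  have sB: "subgroup B K" and nB: "B \<noteq> carrier K"
    and mB: "\<And>X. subgroup X K \<Longrightarrow> B \<subseteq> X \<Longrightarrow> X = B \<or> X = carrier K"
    using assms unfolding maximal_subgroup_def by auto
  have Bsub: "B \<subseteq> carrier K" using sB subgroup.subset by blast
  show ?thesis unfolding maximal_subgroup_def
  proof (intro conjI allI impI)
    show "subgroup (carrier H \<times> B) G" using subB[OF sB] .
    show "carrier H \<times> B \<noteq> carrier G" using nB Bsub H.one_closed by auto
    fix X assume X: "subgroup X G \<and> carrier H \<times> B \<subseteq> X"
    interpret X: subgroup X G using X by blast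
    have "B \<subseteq> bb X" unfolding bb_def using X Bsub H.one_closed by auto
    from mB[OF bb_sub[OF X.subgroup_axioms] this]
    show "X = carrier H \<times> B \<or> X = carrier G"
    proof
      assume e: "bb X = B"
      have "X \<subseteq> carrier H \<times> B"
      proof
        fix x assume x: "x \<in> X"
        obtain h k where hk: "x = (h, k)" by (cases x)
        have hc: "h \<in> carrier H" and kc: "k \<in> carrier K" using x hk X.subset by auto
        have "(inv\<^bsub>H\<^esub> h, \<one>\<^bsub>K\<^esub>) \<in> X" using X hc subgroup.one_closed[OF sB] by auto
        then have "(inv\<^bsub>H\<^esub> h, \<one>\<^bsub>K\<^esub>) \<otimes>\<^bsub>G\<^esub> (h, k) \<in> X" using x hk X.m_closed by blast
        then have "(\<one>\<^bsub>H\<^esub>, k) \<in> X" using hc kc by simp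
        then have "k \<in> B" using e kc unfolding bb_def by blast
        then show "x \<in> carrier H \<times> B" using hk hc by simp
      qed
      then show ?thesis using X by blast
    next
      assume e: "bb X = carrier K"
      have "carrier G \<subseteq> X"
      proof
        fix x assume x: "x \<in> carrier G"
        obtain h k where hk: "x = (h, k)" by (cases x)
        have hc: "h \<in> carrier H" and kc: "k \<in> carrier K" using x hk by auto
        have "(\<one>\<^bsub>H\<^esub>, k) \<in> X" using e kc unfolding bb_def by blast
        moreover have "(h, \<one>\<^bsub>K\<^esub>) \<in> X" using X hc sB subgroup.one_closed by fastforce
        ultimately have "(h, \<one>\<^bsub>K\<^esub>) \<otimes>\<^bsub>G\<^esub> (\<one>\<^bsub>H\<^esub>, k) \<in> X" using X.m_closed by blast
        then show "x \<in> X" using hc kc hk by simp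
      qed
      then show ?thesis using X.subset by blast
    qed
  qed
qed

lemma typeA_eq:
  assumes "subgroup M G" "typeA M"
  shows "M = aa M \<times> carrier K"
proof -
  interpret M: subgroup M G by fact
  show ?thesis
  proof
    show "M \<subseteq> aa M \<times> carrier K"
    proof
      fix x assume x: "x \<in> M"
      obtain h k where hk: "x = (h, k)" by (cases x)
      have hc: "h \<in> carrier H" and kc: "k \<in> carrier K" using x hk M.subset by auto
      have "(\<one>\<^bsub>H\<^esub>, inv\<^bsub>K\<^esub> k) \<in> M" using assms(2) kc unfolding typeA_def by auto
      then have "(h, k) \<otimes>\<^bsub>G\<^esub> (\<one>\<^bsub>H\<^esub>, inv\<^bsub>K\<^esub> k) \<in> M" using x hk M.m_closed by blast
      then have "(h, \<one>\<^bsub>K\<^esub>) \<in> M" using hc kc by simp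
      then show "x \<in> aa M \<times> carrier K" using hk hc kc unfolding aa_def by simp
    qed
    show "aa M \<times> carrier K \<subseteq> M"
    proof
      fix x assume x: "x \<in> aa M \<times> carrier K"
      obtain h k where hk: "x = (h, k)" by (cases x)
      have hc: "h \<in> carrier H" and kc: "k \<in> carrier K" and h1: "(h, \<one>\<^bsub>K\<^esub>) \<in> M"
        using x hk unfolding aa_def by auto
      have "(\<one>\<^bsub>H\<^esub>, k) \<in> M" using assms(2) kc unfolding typeA_def by auto
      then have "(h, \<one>\<^bsub>K\<^esub>) \<otimes>\<^bsub>G\<^esub> (\<one>\<^bsub>H\<^esub>, k) \<in> M" using h1 M.m_closed by blast
      then show "x \<in> M" using hc kc hk by simp
    qed
  qed
qed

lemma typeB_eq:
  assumes "subgroup M G" "typeB M"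
  shows "M = carrier H \<times> bb M"
proof -
  interpret M: subgroup M G by fact
  show ?thesis
  proof
    show "M \<subseteq> carrier H \<times> bb M"
    proof
      fix x assume x: "x \<in> M"
      obtain h k where hk: "x = (h, k)" by (cases x)
      have hc: "h \<in> carrier H" and kc: "k \<in> carrier K" using x hk M.subset by auto
      have "(inv\<^bsub>H\<^esub> h, \<one>\<^bsub>K\<^esub>) \<in> M" using assms(2) hc unfolding typeB_def by auto
      then have "(inv\<^bsub>H\<^esub> h, \<one>\<^bsub>K\<^esub>) \<otimes>\<^bsub>G\<^esub> (h, k) \<in> M" using x hk M.m_closed by blast
      then have "(\<one>\<^bsub>H\<^esub>, k) \<in> M" using hc kc by simp
      then show "x \<in> carrier H \<times> bb M" using hk hc kc unfolding bb_def by simp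
    qed
    show "carrier H \<times> bb M \<subseteq> M"
    proof
      fix x assume x: "x \<in> carrier H \<times> bb M"
      obtain h k where hk: "x = (h, k)" by (cases x)
      have hc: "h \<in> carrier H" and kc: "k \<in> carrier K" and h1: "(\<one>\<^bsub>H\<^esub>, k) \<in> M"
        using x hk unfolding bb_def by auto
      have "(h, \<one>\<^bsub>K\<^esub>) \<in> M" using assms(2) hc unfolding typeB_def by auto
      then have "(h, \<one>\<^bsub>K\<^esub>) \<otimes>\<^bsub>G\<^esub> (\<one>\<^bsub>H\<^esub>, k) \<in> M" using h1 M.m_closed by blast
      then show "x \<in> M" using hc kc hk by simp
    qed
  qed
qed

lemma typeA_max:
  assumes "maximal_subgroup M G" "typeA M"
  shows "maximal_subgroup (aa M) H"
proof -
  have sM: "subgroup M G" and nM: "M \<noteq> carrier G"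
    and mM: "\<And>X. subgroup X G \<Longrightarrow> M \<subseteq> X \<Longrightarrow> X = M \<or> X = carrier G"
    using assms unfolding maximal_subgroup_def by auto
  have eq: "M = aa M \<times> carrier K" using typeA_eq[OF sM assms(2)] .
  show ?thesis unfolding maximal_subgroup_def
  proof (intro conjI allI impI)
    show "subgroup (aa M) H" using aa_sub[OF sM] .
    show "aa M \<noteq> carrier H"
    proof
      assume a: "aa M = carrier H"
      have "M = carrier G" using eq unfolding a by simp
      then show False using nM by blast
    qed
    fix X assume X: "subgroup X H \<and> aa M \<subseteq> X"
    have "X \<subseteq> carrier H" using X subgroup.subset by blast
    have "aa M \<times> carrier K \<subseteq> X \<times> carrier K" using X by blast
    then have "M \<subseteq> X \<times> carrier K" by (rule ssubst[OF eq])
    from mM[OF subA this] X have "X \<times> carrier K = M \<or> X \<times> carrier K = carrier G" by blast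
    then show "X = aa M \<or> X = carrier H"
    proof
      assume "X \<times> carrier K = M"
      then have "X \<times> carrier K = aa M \<times> carrier K" using eq by (rule trans)
      then have "X = aa M" by (rule times_cancel2) (rule K.one_closed)
      then show ?thesis ..
    next
      assume "X \<times> carrier K = carrier G"
      then have "X \<times> carrier K = carrier H \<times> carrier K" by simp
      then have "X = carrier H" by (rule times_cancel2) (rule K.one_closed)
      then show ?thesis ..
    qed
  qed
qed

lemma typeB_max:
  assumes "maximal_subgroup M G" "typeB M"
  shows "maximal_subgroup (bb M) K"
proof -
  have sM: "subgroup M G" and nM: "M \<noteq> carrier G"
    and mM: "\<And>X. subgroup X G \<Longrightarrow> M \<subseteq> X \<Longrightarrow> X = M \<or> X = carrier G"
    using assms unfolding maximal_subgroup_def by auto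
  have eq: "M = carrier H \<times> bb M" using typeB_eq[OF sM assms(2)] .
  show ?thesis unfolding maximal_subgroup_def
  proof (intro conjI allI impI)
    show "subgroup (bb M) K" using bb_sub[OF sM] .
    show "bb M \<noteq> carrier K"
    proof
      assume a: "bb M = carrier K"
      have "M = carrier G" using eq unfolding a by simp
      then show False using nM by blast
    qed
    fix X assume X: "subgroup X K \<and> bb M \<subseteq> X"
    have "carrier H \<times> bb M \<subseteq> carrier H \<times> X" using X by blast
    then have "M \<subseteq> carrier H \<times> X" by (rule ssubst[OF eq])
    from mM[OF subB this] X have "carrier H \<times> X = M \<or> carrier H \<times> X = carrier G" by blast
    then show "X = bb M \<or> X = carrier K"
    proof
      assume "carrier H \<times> X = M"
      then have "carrier H \<times> X = carrier H \<times> bb M" using eq by (rule trans)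
      then have "X = bb M" by (rule times_cancel1) (rule H.one_closed)
      then show ?thesis ..
    next
      assume "carrier H \<times> X = carrier G"
      then have "carrier H \<times> X = carrier H \<times> carrier K" by simp
      then have "X = carrier K" by (rule times_cancel1) (rule H.one_closed)
      then show ?thesis ..
    qed
  qed
qed

end


lemma (in group) comm_normal:
  assumes X: "subgroup X G" and "derived_set G (carrier G) \<subseteq> X"
  shows "X \<lhd> G"
proof (subst normal_inv_iff, intro conjI X ballI)
  fix x h assume x: "x \<in> carrier G" and h: "h \<in> X"
  have hc: "h \<in> carrier G" using h subgroup.subset[OF X] by blast
  have "x \<otimes> h \<otimes> inv x \<otimes> inv h \<in> X" using assms(2) x hc by blast
  then have "x \<otimes> h \<otimes> inv x \<otimes> inv h \<otimes> h \<in> X" using h subgroup.m_closed[OF X] by blast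
  moreover have "x \<otimes> h \<otimes> inv x \<otimes> inv h \<otimes> h = x \<otimes> h \<otimes> inv x"
    using x hc by (simp add: m_assoc)
  ultimately show "x \<otimes> h \<otimes> inv x \<in> X" by simp
qed

context prod2 begin

lemma surjH:
  assumes "maximal_subgroup M G" "\<not> typeA M" "h \<in> carrier H"
  shows "\<exists>k\<in>carrier K. (h, k) \<in> M"
proof -
  have sM: "subgroup M G" and mM: "\<And>X. subgroup X G \<Longrightarrow> M \<subseteq> X \<Longrightarrow> X = M \<or> X = carrier G"
    using assms(1) unfolding maximal_subgroup_def by auto
  interpret M: subgroup M G by (rule sM)
  define X where "X = {x \<in> carrier G. \<exists>k\<in>carrier K. (fst x, k) \<in> M}"
  have sX: "subgroup X G"
  proof
    show "X \<subseteq> carrier G" unfolding X_def by blast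
    show "\<one>\<^bsub>G\<^esub> \<in> X" unfolding X_def using M.one_closed by auto
  next
    fix x y assume "x \<in> X" "y \<in> X"
    then obtain k1 k2 where k: "k1 \<in> carrier K" "(fst x, k1) \<in> M" "k2 \<in> carrier K" "(fst y, k2) \<in> M"
      and xy: "x \<in> carrier G" "y \<in> carrier G" unfolding X_def by blast
    then have "(fst x, k1) \<otimes>\<^bsub>G\<^esub> (fst y, k2) \<in> M" using M.m_closed by blast
    then have "(fst x \<otimes>\<^bsub>H\<^esub> fst y, k1 \<otimes>\<^bsub>K\<^esub> k2) \<in> M" by simp
    moreover have "fst (x \<otimes>\<^bsub>G\<^esub> y) = fst x \<otimes>\<^bsub>H\<^esub> fst y" by (simp add: mult_DirProd')
    moreover have "x \<otimes>\<^bsub>G\<^esub> y \<in> carrier G" using xy by (intro monoid.m_closed[OF group.is_monoid[OF Ggrp]])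
    ultimately show "x \<otimes>\<^bsub>G\<^esub> y \<in> X" unfolding X_def using k by auto
  next
    fix x assume "x \<in> X"
    then obtain k where k: "k \<in> carrier K" "(fst x, k) \<in> M" and xc: "x \<in> carrier G" unfolding X_def by blast
    obtain a b where ab: "x = (a, b)" by (cases x)
    have a: "a \<in> carrier H" and b: "b \<in> carrier K" using xc ab by auto
    have "inv\<^bsub>G\<^esub> (a, k) \<in> M" using k ab M.m_inv_closed by simp
    then have "(inv\<^bsub>H\<^esub> a, inv\<^bsub>K\<^esub> k) \<in> M" using a k by simp
    then show "inv\<^bsub>G\<^esub> x \<in> X" unfolding X_def using ab a b k by auto
  qed
  have "M \<subseteq> X" unfolding X_def using M.subset by force
  from mM[OF sX this] have "X = M \<or> X = carrier G" .
  moreover have "X \<noteq> M"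
  proof
    assume e: "X = M"
    obtain k where k: "k \<in> carrier K" "(\<one>\<^bsub>H\<^esub>, k) \<notin> M" using assms(2) unfolding typeA_def by blast
    have "(\<one>\<^bsub>H\<^esub>, k) \<in> X" unfolding X_def using k M.one_closed by auto
    then show False using e k by blast
  qed
  ultimately have "X = carrier G" by blast
  then have "(h, \<one>\<^bsub>K\<^esub>) \<in> X" using assms(3) by auto
  then show ?thesis unfolding X_def by auto
qed

lemma surjK:
  assumes "maximal_subgroup M G" "\<not> typeB M" "k \<in> carrier K"
  shows "\<exists>h\<in>carrier H. (h, k) \<in> M"
proof -
  have sM: "subgroup M G" and mM: "\<And>X. subgroup X G \<Longrightarrow> M \<subseteq> X \<Longrightarrow> X = M \<or> X = carrier G"
    using assms(1) unfolding maximal_subgroup_def by auto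
  interpret M: subgroup M G by (rule sM)
  define X where "X = {x \<in> carrier G. \<exists>h\<in>carrier H. (h, snd x) \<in> M}"
  have sX: "subgroup X G"
  proof
    show "X \<subseteq> carrier G" unfolding X_def by blast
    show "\<one>\<^bsub>G\<^esub> \<in> X" unfolding X_def using M.one_closed by auto
  next
    fix x y assume "x \<in> X" "y \<in> X"
    then obtain k1 k2 where k: "k1 \<in> carrier H" "(k1, snd x) \<in> M" "k2 \<in> carrier H" "(k2, snd y) \<in> M"
      and xy: "x \<in> carrier G" "y \<in> carrier G" unfolding X_def by blast
    then have "(k1, snd x) \<otimes>\<^bsub>G\<^esub> (k2, snd y) \<in> M" using M.m_closed by blast
    then have "(k1 \<otimes>\<^bsub>H\<^esub> k2, snd x \<otimes>\<^bsub>K\<^esub> snd y) \<in> M" by simp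
    moreover have "snd (x \<otimes>\<^bsub>G\<^esub> y) = snd x \<otimes>\<^bsub>K\<^esub> snd y" by (simp add: mult_DirProd')
    moreover have "x \<otimes>\<^bsub>G\<^esub> y \<in> carrier G" using xy by (intro monoid.m_closed[OF group.is_monoid[OF Ggrp]])
    ultimately show "x \<otimes>\<^bsub>G\<^esub> y \<in> X" unfolding X_def using k by auto
  next
    fix x assume "x \<in> X"
    then obtain k where k: "k \<in> carrier H" "(k, snd x) \<in> M" and xc: "x \<in> carrier G" unfolding X_def by blast
    obtain a b where ab: "x = (a, b)" by (cases x)
    have a: "a \<in> carrier H" and b: "b \<in> carrier K" using xc ab by auto
    have "inv\<^bsub>G\<^esub> (k, b) \<in> M" using k ab M.m_inv_closed by simp
    then have "(inv\<^bsub>H\<^esub> k, inv\<^bsub>K\<^esub> b) \<in> M" using b k by simp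
    then show "inv\<^bsub>G\<^esub> x \<in> X" unfolding X_def using ab a b k by auto
  qed
  have "M \<subseteq> X" unfolding X_def using M.subset by force
  from mM[OF sX this] have "X = M \<or> X = carrier G" .
  moreover have "X \<noteq> M"
  proof
    assume e: "X = M"
    obtain h where h: "h \<in> carrier H" "(h, \<one>\<^bsub>K\<^esub>) \<notin> M" using assms(2) unfolding typeB_def by blast
    have "(h, \<one>\<^bsub>K\<^esub>) \<in> X" unfolding X_def using h M.one_closed by auto
    then show False using e h by blast
  qed
  ultimately have "X = carrier G" by blast
  then have "(\<one>\<^bsub>H\<^esub>, k) \<in> X" using assms(3) by auto
  then show ?thesis unfolding X_def by auto
qed

end


lemma set_multI: "a \<in> A \<Longrightarrow> b \<in> B \<Longrightarrow> x = a \<otimes>\<^bsub>G\<^esub> b \<Longrightarrow> x \<in> A <#>\<^bsub>G\<^esub> B"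
  unfolding set_mult_def by blast
lemma set_multE: "x \<in> A <#>\<^bsub>G\<^esub> B \<Longrightarrow> \<exists>a\<in>A. \<exists>b\<in>B. x = a \<otimes>\<^bsub>G\<^esub> b"
  unfolding set_mult_def by blast

context prod2 begin

lemma aa_normal:
  assumes "maximal_subgroup M G" "\<not> typeA M"
  shows "aa M \<lhd> H"
proof -
  have sM: "subgroup M G" using assms(1) unfolding maximal_subgroup_def by auto
  interpret M: subgroup M G by (rule sM)
  show ?thesis
  proof (subst H.normal_inv_iff, intro conjI aa_sub[OF sM] ballI)
    fix x h assume x: "x \<in> carrier H" and h: "h \<in> aa M"
    have hc: "h \<in> carrier H" and h1: "(h, \<one>\<^bsub>K\<^esub>) \<in> M" using h unfolding aa_def by auto
    obtain k where k: "k \<in> carrier K" "(x, k) \<in> M" using surjH[OF assms x] by blast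
    have "(x, k) \<otimes>\<^bsub>G\<^esub> (h, \<one>\<^bsub>K\<^esub>) \<otimes>\<^bsub>G\<^esub> inv\<^bsub>G\<^esub> (x, k) \<in> M"
      using k h1 M.m_closed M.m_inv_closed by blast
    then have "(x \<otimes>\<^bsub>H\<^esub> h \<otimes>\<^bsub>H\<^esub> inv\<^bsub>H\<^esub> x, \<one>\<^bsub>K\<^esub>) \<in> M" using x k hc by simp
    then show "x \<otimes>\<^bsub>H\<^esub> h \<otimes>\<^bsub>H\<^esub> inv\<^bsub>H\<^esub> x \<in> aa M" unfolding aa_def using x hc by simp
  qed
qed

lemma bb_normal:
  assumes "maximal_subgroup M G" "\<not> typeB M"
  shows "bb M \<lhd> K"
proof -
  have sM: "subgroup M G" using assms(1) unfolding maximal_subgroup_def by auto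
  interpret M: subgroup M G by (rule sM)
  show ?thesis
  proof (subst K.normal_inv_iff, intro conjI bb_sub[OF sM] ballI)
    fix x h assume x: "x \<in> carrier K" and h: "h \<in> bb M"
    have hc: "h \<in> carrier K" and h1: "(\<one>\<^bsub>H\<^esub>, h) \<in> M" using h unfolding bb_def by auto
    obtain k where k: "k \<in> carrier H" "(k, x) \<in> M" using surjK[OF assms x] by blast
    have "(k, x) \<otimes>\<^bsub>G\<^esub> (\<one>\<^bsub>H\<^esub>, h) \<otimes>\<^bsub>G\<^esub> inv\<^bsub>G\<^esub> (k, x) \<in> M"
      using k h1 M.m_closed M.m_inv_closed by blast
    then have "(\<one>\<^bsub>H\<^esub>, x \<otimes>\<^bsub>K\<^esub> h \<otimes>\<^bsub>K\<^esub> inv\<^bsub>K\<^esub> x) \<in> M" using x k hc by simp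
    then show "x \<otimes>\<^bsub>K\<^esub> h \<otimes>\<^bsub>K\<^esub> inv\<^bsub>K\<^esub> x \<in> bb M" unfolding bb_def using x hc by simp
  qed
qed

lemma bigA:
  assumes "maximal_subgroup M G" and N: "N \<lhd> H" and "aa M \<subseteq> N" "aa M \<noteq> N"
  shows "N = carrier H"
proof -
  have sM: "subgroup M G" and mM: "\<And>X. subgroup X G \<Longrightarrow> M \<subseteq> X \<Longrightarrow> X = M \<or> X = carrier G"
    using assms(1) unfolding maximal_subgroup_def by auto
  interpret M: subgroup M G by (rule sM)
  interpret N: normal N H by (rule N)
  interpret GG: group G by (rule Ggrp)
  let ?NN = "N \<times> {\<one>\<^bsub>K\<^esub>}"
  have sNN: "subgroup ?NN G" using DirProd_subgroups[OF H.is_group N.subgroup_axioms K.is_group K.triv_subgroup] .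
  have nNN: "?NN \<lhd> G"
  proof (subst GG.normal_inv_iff, intro conjI sNN ballI)
    fix x h assume x: "x \<in> carrier G" and h: "h \<in> ?NN"
    obtain a b where ab: "x = (a, b)" by (cases x)
    obtain n where n: "h = (n, \<one>\<^bsub>K\<^esub>)" "n \<in> N" using h by blast
    have a: "a \<in> carrier H" and b: "b \<in> carrier K" using x ab by auto
    have nc: "n \<in> carrier H" using n N.subset by blast
    have "a \<otimes>\<^bsub>H\<^esub> n \<otimes>\<^bsub>H\<^esub> inv\<^bsub>H\<^esub> a \<in> N" using N.inv_op_closed2 a n(2) by blast
    then show "x \<otimes>\<^bsub>G\<^esub> h \<otimes>\<^bsub>G\<^esub> inv\<^bsub>G\<^esub> x \<in> ?NN" using ab n a b nc by simp
  qed
  interpret SI: second_isomorphism_grp ?NN G M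
    unfolding second_isomorphism_grp_def second_isomorphism_grp_axioms_def using nNN sM by blast
  have sX: "subgroup (?NN <#>\<^bsub>G\<^esub> M) G" by (rule SI.normal_set_mult_subgroup)
  have MX: "M \<subseteq> ?NN <#>\<^bsub>G\<^esub> M"
  proof
    fix m assume m: "m \<in> M"
    have "\<one>\<^bsub>G\<^esub> \<otimes>\<^bsub>G\<^esub> m = m" using m M.subset GG.l_one by blast
    moreover have "\<one>\<^bsub>G\<^esub> \<in> ?NN" using N.one_closed by simp
    ultimately show "m \<in> ?NN <#>\<^bsub>G\<^esub> M" using m by (intro set_multI[of "\<one>\<^bsub>G\<^esub>" _ m]) auto
  qed
  obtain n where n: "n \<in> N" "n \<notin> aa M" using assms(3,4) by blast
  have nc: "n \<in> carrier H" using n N.subset by blast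
  have "(n, \<one>\<^bsub>K\<^esub>) \<in> ?NN <#>\<^bsub>G\<^esub> M"
  proof -
    have "(n, \<one>\<^bsub>K\<^esub>) \<otimes>\<^bsub>G\<^esub> \<one>\<^bsub>G\<^esub> = (n, \<one>\<^bsub>K\<^esub>)" using nc by simp
    then show ?thesis using n M.one_closed by (intro set_multI) auto
  qed
  moreover have "(n, \<one>\<^bsub>K\<^esub>) \<notin> M" using n nc unfolding aa_def by blast
  ultimately have "?NN <#>\<^bsub>G\<^esub> M \<noteq> M" by blast
  then have X: "?NN <#>\<^bsub>G\<^esub> M = carrier G" using mM[OF sX MX] by blast
  show ?thesis
  proof
    show "N \<subseteq> carrier H" using N.subset .
    show "carrier H \<subseteq> N"
    proof
      fix h assume h: "h \<in> carrier H"
      then have "(h, \<one>\<^bsub>K\<^esub>) \<in> ?NN <#>\<^bsub>G\<^esub> M" using X by simp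
      then have "\<exists>y\<in>?NN. \<exists>m\<in>M. (h, \<one>\<^bsub>K\<^esub>) = y \<otimes>\<^bsub>G\<^esub> m" by (rule set_multE)
      then obtain y m where y: "y \<in> ?NN" and m: "m \<in> M" and e: "(h, \<one>\<^bsub>K\<^esub>) = y \<otimes>\<^bsub>G\<^esub> m"
        by blast
      obtain n' where n': "y = (n', \<one>\<^bsub>K\<^esub>)" "n' \<in> N" using y by blast
      obtain m1 m2 where mm: "m = (m1, m2)" by (cases m)
      have m1: "m1 \<in> carrier H" and m2: "m2 \<in> carrier K" using m mm M.subset by auto
      have n'c: "n' \<in> carrier H" using n' N.subset by blast
      from e have e1: "h = n' \<otimes>\<^bsub>H\<^esub> m1" and e2: "\<one>\<^bsub>K\<^esub> = \<one>\<^bsub>K\<^esub> \<otimes>\<^bsub>K\<^esub> m2" using n' mm by simp_all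
      then have "m2 = \<one>\<^bsub>K\<^esub>" using m2 by simp
      then have "m1 \<in> aa M" unfolding aa_def using m mm m1 by simp
      then have "m1 \<in> N" using assms(3) by blast
      then show "h \<in> N" using e1 n'(2) N.m_closed by simp
    qed
  qed
qed

lemma bigB:
  assumes "maximal_subgroup M G" and N: "N \<lhd> K" and "bb M \<subseteq> N" "bb M \<noteq> N"
  shows "N = carrier K"
proof -
  have sM: "subgroup M G" and mM: "\<And>X. subgroup X G \<Longrightarrow> M \<subseteq> X \<Longrightarrow> X = M \<or> X = carrier G"
    using assms(1) unfolding maximal_subgroup_def by auto
  interpret M: subgroup M G by (rule sM)
  interpret N: normal N K by (rule N)
  interpret GG: group G by (rule Ggrp)
  let ?NN = "{\<one>\<^bsub>H\<^esub>} \<times> N"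
  have sNN: "subgroup ?NN G" using DirProd_subgroups[OF H.is_group H.triv_subgroup K.is_group N.subgroup_axioms] .
  have nNN: "?NN \<lhd> G"
  proof (subst GG.normal_inv_iff, intro conjI sNN ballI)
    fix x h assume x: "x \<in> carrier G" and h: "h \<in> ?NN"
    obtain a b where ab: "x = (a, b)" by (cases x)
    obtain n where n: "h = (\<one>\<^bsub>H\<^esub>, n)" "n \<in> N" using h by blast
    have a: "a \<in> carrier H" and b: "b \<in> carrier K" using x ab by auto
    have nc: "n \<in> carrier K" using n N.subset by blast
    have "b \<otimes>\<^bsub>K\<^esub> n \<otimes>\<^bsub>K\<^esub> inv\<^bsub>K\<^esub> b \<in> N" using N.inv_op_closed2 b n(2) by blast
    then show "x \<otimes>\<^bsub>G\<^esub> h \<otimes>\<^bsub>G\<^esub> inv\<^bsub>G\<^esub> x \<in> ?NN" using ab n a b nc by simp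
  qed
  interpret SI: second_isomorphism_grp ?NN G M
    unfolding second_isomorphism_grp_def second_isomorphism_grp_axioms_def using nNN sM by blast
  have sX: "subgroup (?NN <#>\<^bsub>G\<^esub> M) G" by (rule SI.normal_set_mult_subgroup)
  have MX: "M \<subseteq> ?NN <#>\<^bsub>G\<^esub> M"
  proof
    fix m assume m: "m \<in> M"
    have "\<one>\<^bsub>G\<^esub> \<otimes>\<^bsub>G\<^esub> m = m" using m M.subset GG.l_one by blast
    moreover have "\<one>\<^bsub>G\<^esub> \<in> ?NN" using N.one_closed by simp
    ultimately show "m \<in> ?NN <#>\<^bsub>G\<^esub> M" using m by (intro set_multI[of "\<one>\<^bsub>G\<^esub>" _ m]) auto
  qed
  obtain n where n: "n \<in> N" "n \<notin> bb M" using assms(3,4) by blast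
  have nc: "n \<in> carrier K" using n N.subset by blast
  have "(\<one>\<^bsub>H\<^esub>, n) \<in> ?NN <#>\<^bsub>G\<^esub> M"
  proof -
    have "(\<one>\<^bsub>H\<^esub>, n) \<otimes>\<^bsub>G\<^esub> \<one>\<^bsub>G\<^esub> = (\<one>\<^bsub>H\<^esub>, n)" using nc by simp
    then show ?thesis using n M.one_closed by (intro set_multI) auto
  qed
  moreover have "(\<one>\<^bsub>H\<^esub>, n) \<notin> M" using n nc unfolding bb_def by blast
  ultimately have "?NN <#>\<^bsub>G\<^esub> M \<noteq> M" by blast
  then have X: "?NN <#>\<^bsub>G\<^esub> M = carrier G" using mM[OF sX MX] by blast
  show ?thesis
  proof
    show "N \<subseteq> carrier K" using N.subset .
    show "carrier K \<subseteq> N"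
    proof
      fix h assume h: "h \<in> carrier K"
      then have "(\<one>\<^bsub>H\<^esub>, h) \<in> ?NN <#>\<^bsub>G\<^esub> M" using X by simp
      then have "\<exists>y\<in>?NN. \<exists>m\<in>M. (\<one>\<^bsub>H\<^esub>, h) = y \<otimes>\<^bsub>G\<^esub> m" by (rule set_multE)
      then obtain y m where y: "y \<in> ?NN" and m: "m \<in> M" and e: "(\<one>\<^bsub>H\<^esub>, h) = y \<otimes>\<^bsub>G\<^esub> m"
        by blast
      obtain n' where n': "y = (\<one>\<^bsub>H\<^esub>, n')" "n' \<in> N" using y by blast
      obtain m1 m2 where mm: "m = (m1, m2)" by (cases m)
      have m1: "m1 \<in> carrier H" and m2: "m2 \<in> carrier K" using m mm M.subset by auto
      have n'c: "n' \<in> carrier K" using n' N.subset by blast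
      from e have e1: "h = n' \<otimes>\<^bsub>K\<^esub> m2" and e2: "\<one>\<^bsub>H\<^esub> = \<one>\<^bsub>H\<^esub> \<otimes>\<^bsub>H\<^esub> m1" using n' mm by simp_all
      then have "m1 = \<one>\<^bsub>H\<^esub>" using m1 by simp
      then have "m2 \<in> bb M" unfolding bb_def using m mm m2 by simp
      then have "m2 \<in> N" using assms(3) by blast
      then show "h \<in> N" using e1 n'(2) N.m_closed by simp
    qed
  qed
qed

end


lemma (in group) derived_set_sub: "derived_set G (carrier G) \<subseteq> derived G (carrier G)"
proof
  fix x assume "x \<in> derived_set G (carrier G)"
  then show "x \<in> derived G (carrier G)" unfolding derived_def by (rule generate.incl)
qed

context prod2 begin

lemma typeB_iff: "subgroup M G \<Longrightarrow> typeB M \<longleftrightarrow> aa M = carrier H"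
  unfolding typeB_def aa_def by blast
lemma typeA_iff: "subgroup M G \<Longrightarrow> typeA M \<longleftrightarrow> bb M = carrier K"
  unfolding typeA_def bb_def by blast

lemma comm_HK:
  assumes "maximal_subgroup M G" "\<not> typeB M" and D: "derived_set H (carrier H) \<subseteq> aa M"
  shows "derived_set K (carrier K) \<subseteq> bb M"
proof
  have sM: "subgroup M G" using assms(1) unfolding maximal_subgroup_def by auto
  interpret M: subgroup M G by (rule sM)
  fix c assume "c \<in> derived_set K (carrier K)"
  then obtain k1 k2 where k: "k1 \<in> carrier K" "k2 \<in> carrier K"
    and c: "c = k1 \<otimes>\<^bsub>K\<^esub> k2 \<otimes>\<^bsub>K\<^esub> inv\<^bsub>K\<^esub> k1 \<otimes>\<^bsub>K\<^esub> inv\<^bsub>K\<^esub> k2" by blast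
  obtain h1 where h1: "h1 \<in> carrier H" "(h1, k1) \<in> M" using surjK[OF assms(1,2) k(1)] by blast
  obtain h2 where h2: "h2 \<in> carrier H" "(h2, k2) \<in> M" using surjK[OF assms(1,2) k(2)] by blast
  define d where "d = h1 \<otimes>\<^bsub>H\<^esub> h2 \<otimes>\<^bsub>H\<^esub> inv\<^bsub>H\<^esub> h1 \<otimes>\<^bsub>H\<^esub> inv\<^bsub>H\<^esub> h2"
  have "(h1, k1) \<otimes>\<^bsub>G\<^esub> (h2, k2) \<otimes>\<^bsub>G\<^esub> inv\<^bsub>G\<^esub> (h1, k1) \<otimes>\<^bsub>G\<^esub> inv\<^bsub>G\<^esub> (h2, k2) \<in> M"
    using h1 h2 M.m_closed M.m_inv_closed by blast
  then have dc: "(d, c) \<in> M" using h1 h2 k unfolding c d_def by simp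
  have dC: "d \<in> carrier H" unfolding d_def using h1 h2 by simp
  have "d \<in> derived_set H (carrier H)" unfolding d_def using h1 h2 by blast
  then have "(d, \<one>\<^bsub>K\<^esub>) \<in> M" using D unfolding aa_def by blast
  then have "inv\<^bsub>G\<^esub> (d, \<one>\<^bsub>K\<^esub>) \<otimes>\<^bsub>G\<^esub> (d, c) \<in> M" using dc M.m_closed M.m_inv_closed by blast
  moreover have cc: "c \<in> carrier K" unfolding c using k by simp
  ultimately have "(\<one>\<^bsub>H\<^esub>, c) \<in> M" using dC by simp
  then show "c \<in> bb M" unfolding bb_def using cc by simp
qed

lemma comm_KH:
  assumes "maximal_subgroup M G" "\<not> typeA M" and D: "derived_set K (carrier K) \<subseteq> bb M"
  shows "derived_set H (carrier H) \<subseteq> aa M"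
proof
  have sM: "subgroup M G" using assms(1) unfolding maximal_subgroup_def by auto
  interpret M: subgroup M G by (rule sM)
  fix c assume "c \<in> derived_set H (carrier H)"
  then obtain k1 k2 where k: "k1 \<in> carrier H" "k2 \<in> carrier H"
    and c: "c = k1 \<otimes>\<^bsub>H\<^esub> k2 \<otimes>\<^bsub>H\<^esub> inv\<^bsub>H\<^esub> k1 \<otimes>\<^bsub>H\<^esub> inv\<^bsub>H\<^esub> k2" by blast
  obtain h1 where h1: "h1 \<in> carrier K" "(k1, h1) \<in> M" using surjH[OF assms(1,2) k(1)] by blast
  obtain h2 where h2: "h2 \<in> carrier K" "(k2, h2) \<in> M" using surjH[OF assms(1,2) k(2)] by blast
  define d where "d = h1 \<otimes>\<^bsub>K\<^esub> h2 \<otimes>\<^bsub>K\<^esub> inv\<^bsub>K\<^esub> h1 \<otimes>\<^bsub>K\<^esub> inv\<^bsub>K\<^esub> h2"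
  have "(k1, h1) \<otimes>\<^bsub>G\<^esub> (k2, h2) \<otimes>\<^bsub>G\<^esub> inv\<^bsub>G\<^esub> (k1, h1) \<otimes>\<^bsub>G\<^esub> inv\<^bsub>G\<^esub> (k2, h2) \<in> M"
    using h1 h2 M.m_closed M.m_inv_closed by blast
  then have dc: "(c, d) \<in> M" using h1 h2 k unfolding c d_def by simp
  have dC: "d \<in> carrier K" unfolding d_def using h1 h2 by simp
  have "d \<in> derived_set K (carrier K)" unfolding d_def using h1 h2 by blast
  then have "(\<one>\<^bsub>H\<^esub>, d) \<in> M" using D unfolding bb_def by blast
  then have "inv\<^bsub>G\<^esub> (\<one>\<^bsub>H\<^esub>, d) \<otimes>\<^bsub>G\<^esub> (c, d) \<in> M" using dc M.m_closed M.m_inv_closed by blast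
  moreover have cc: "c \<in> carrier H" unfolding c using k by simp
  ultimately have "(c, \<one>\<^bsub>K\<^esub>) \<in> M" using dC by simp
  then show "c \<in> aa M" unfolding aa_def using cc by simp
qed

lemma diag_main:
  assumes M: "maximal_subgroup M G" and nA: "\<not> typeA M" and nB: "\<not> typeB M"
    and solv: "solvable H \<or> solvable K"
  shows "maximal_subgroup (aa M) H \<and> aa M \<lhd> H \<and> maximal_subgroup (bb M) K \<and> bb M \<lhd> K"
proof -
  have sM: "subgroup M G" using M unfolding maximal_subgroup_def by auto
  have nA': "aa M \<noteq> carrier H" using typeB_iff[OF sM] nB by blast
  have nB': "bb M \<noteq> carrier K" using typeA_iff[OF sM] nA by blast
  have naa: "aa M \<lhd> H" using aa_normal[OF M nA] .
  have nbb: "bb M \<lhd> K" using bb_normal[OF M nB] .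
  have maxnA: "N' = aa M \<or> N' = carrier H" if "N' \<lhd> H" "aa M \<subseteq> N'" for N'
    using bigA[OF M that] by blast
  have maxnB: "N' = bb M \<or> N' = carrier K" if "N' \<lhd> K" "bb M \<subseteq> N'" for N'
    using bigB[OF M that] by blast
  have commH: "derived_set H (carrier H) \<subseteq> aa M"
    and commK: "derived_set K (carrier K) \<subseteq> bb M"
  proof -
    from solv have "derived_set H (carrier H) \<subseteq> aa M \<and> derived_set K (carrier K) \<subseteq> bb M"
    proof
      assume "solvable H"
      then have "derived H (carrier H) \<subseteq> aa M"
        using H.solv_maxnormal_comm[OF _ naa nA' maxnA] by blast
      then have "derived_set H (carrier H) \<subseteq> aa M" using H.derived_set_sub by blast
      then show ?thesis using comm_HK[OF M nB] by blast
    next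
      assume "solvable K"
      then have "derived K (carrier K) \<subseteq> bb M"
        using K.solv_maxnormal_comm[OF _ nbb nB' maxnB] by blast
      then have "derived_set K (carrier K) \<subseteq> bb M" using K.derived_set_sub by blast
      then show ?thesis using comm_KH[OF M nA] by blast
    qed
    then show "derived_set H (carrier H) \<subseteq> aa M" "derived_set K (carrier K) \<subseteq> bb M" by blast+
  qed
  have "maximal_subgroup (aa M) H"
    unfolding maximal_subgroup_def
  proof (intro conjI allI impI)
    show "subgroup (aa M) H" using aa_sub[OF sM] .
    show "aa M \<noteq> carrier H" by (rule nA')
    fix X assume X: "subgroup X H \<and> aa M \<subseteq> X"
    have "X \<lhd> H" using H.comm_normal[of X] X commH by blast
    then show "X = aa M \<or> X = carrier H" using maxnA X by blast
  qed
  moreover have "maximal_subgroup (bb M) K"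
    unfolding maximal_subgroup_def
  proof (intro conjI allI impI)
    show "subgroup (bb M) K" using bb_sub[OF sM] .
    show "bb M \<noteq> carrier K" by (rule nB')
    fix X assume X: "subgroup X K \<and> bb M \<subseteq> X"
    have "X \<lhd> K" using K.comm_normal[of X] X commK by blast
    then show "X = bb M \<or> X = carrier K" using maxnB X by blast
  qed
  ultimately show ?thesis using naa nbb by blast
qed

end


lemma (in group) cover:
  assumes A: "maximal_subgroup A G" "A \<lhd> G" and C: "subgroup C G" "\<not> C \<subseteq> A"
    and h: "h \<in> carrier G"
  shows "\<exists>c\<in>C. h \<otimes> inv c \<in> A"
proof -
  have sA: "subgroup A G" and mA: "\<And>X. subgroup X G \<Longrightarrow> A \<subseteq> X \<Longrightarrow> X = A \<or> X = carrier G"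
    using A(1) unfolding maximal_subgroup_def by auto
  interpret SI: second_isomorphism_grp A G C
    unfolding second_isomorphism_grp_def second_isomorphism_grp_axioms_def using A(2) C(1) by blast
  have sX: "subgroup (A <#> C) G" by (rule SI.normal_set_mult_subgroup)
  have AX: "A \<subseteq> A <#> C"
  proof
    fix a assume a: "a \<in> A"
    have "a \<in> carrier G" using a subgroup.subset[OF sA] by blast
    then have "a = a \<otimes> \<one>" by simp
    then show "a \<in> A <#> C" using a subgroup.one_closed[OF C(1)] by (intro set_multI) auto
  qed
  obtain c where c: "c \<in> C" "c \<notin> A" using C(2) by blast
  have "c \<in> carrier G" using c subgroup.subset[OF C(1)] by blast
  then have "c = \<one> \<otimes> c" by simp
  then have "c \<in> A <#> C" using c subgroup.one_closed[OF sA] by (intro set_multI) auto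
  then have "A <#> C \<noteq> A" using c by blast
  then have "A <#> C = carrier G" using mA[OF sX AX] by blast
  then have "h \<in> A <#> C" using h by simp
  then have "\<exists>a\<in>A. \<exists>c\<in>C. h = a \<otimes> c" by (rule set_multE)
  then obtain a c where ac: "a \<in> A" "c \<in> C" "h = a \<otimes> c" by blast
  have "h \<otimes> inv c = a" using ac subgroup.subset[OF sA] subgroup.subset[OF C(1)]
    by (auto simp: m_assoc)
  then show ?thesis using ac by blast
qed

lemma (in group) inter_sub:
  assumes "\<forall>X\<in>F. subgroup X G"
  shows "subgroup (carrier G \<inter> \<Inter>F) G"
proof
  show "carrier G \<inter> \<Inter>F \<subseteq> carrier G" by blast
  have "\<one> \<in> X" if "X \<in> F" for X using assms that subgroup.one_closed by metis
  then show "\<one> \<in> carrier G \<inter> \<Inter>F" by blast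
next
  fix x y assume xy: "x \<in> carrier G \<inter> \<Inter>F" "y \<in> carrier G \<inter> \<Inter>F"
  have "x \<otimes> y \<in> X" if "X \<in> F" for X
  proof -
    have "subgroup X G" using assms that by blast
    moreover have "x \<in> X" "y \<in> X" using xy that by blast+
    ultimately show ?thesis by (rule subgroup.m_closed)
  qed
  then show "x \<otimes> y \<in> carrier G \<inter> \<Inter>F" using xy by blast
next
  fix x assume x: "x \<in> carrier G \<inter> \<Inter>F"
  have "inv x \<in> X" if "X \<in> F" for X
  proof -
    have "subgroup X G" using assms that by blast
    moreover have "x \<in> X" using x that by blast
    ultimately show ?thesis by (rule subgroup.m_inv_closed)
  qed
  then show "inv x \<in> carrier G \<inter> \<Inter>F" using x by blast
qed

lemma (in group) exchange:
  assumes gp: "general_position G S" and subs: "\<forall>X\<in>S. subgroup X G" and M: "M \<in> S"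
    and P: "subgroup P G"
    and nJP: "\<not> carrier G \<inter> \<Inter>(S - {M}) \<subseteq> P"
    and cov: "\<forall>m\<in>carrier G. \<exists>j\<in>carrier G \<inter> \<Inter>(S - {M}). m \<otimes> inv j \<in> P"
  shows "general_position G (insert P (S - {M})) \<and> P \<notin> S - {M}"
proof -
  let ?J = "carrier G \<inter> \<Inter>(S - {M})"
  have fin: "finite S" using gp unfolding general_position_def by blast
  have gpS: "\<forall>X\<in>S. \<not> carrier G \<inter> \<Inter>(S - {X}) \<subseteq> X" using gp gp_iff[OF fin] by blast
  have PnS: "P \<notin> S - {M}"
  proof
    assume "P \<in> S - {M}"
    then have "?J \<subseteq> P" by blast
    then show False using nJP by blast
  qed
  have "\<forall>X\<in>insert P (S - {M}). \<not> carrier G \<inter> \<Inter>(insert P (S - {M}) - {X}) \<subseteq> X"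
  proof
    fix X assume X: "X \<in> insert P (S - {M})"
    show "\<not> carrier G \<inter> \<Inter>(insert P (S - {M}) - {X}) \<subseteq> X"
    proof (cases "X = P")
      case True
      have "insert P (S - {M}) - {X} = S - {M}" using True PnS by blast
      then show ?thesis using nJP True by simp
    next
      case False
      then have XS: "X \<in> S" "X \<noteq> M" using X by auto
      have sX: "subgroup X G" using subs XS by blast
      let ?R = "carrier G \<inter> \<Inter>(S - {M, X})"
      have sR: "subgroup ?R G" using inter_sub[of "S - {M, X}"] subs by blast
      have sub: "carrier G \<inter> \<Inter>(S - {X}) \<subseteq> ?R" by blast
      have "\<not> carrier G \<inter> \<Inter>(S - {X}) \<subseteq> X" using gpS XS(1) by (rule bspec)
      then obtain m where m0: "m \<in> carrier G \<inter> \<Inter>(S - {X})" "m \<notin> X" by (meson subsetI)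
      have m: "m \<in> ?R" "m \<notin> X" using m0 sub by blast+
      have mc: "m \<in> carrier G" using m by blast
      obtain j where j: "j \<in> ?J" "m \<otimes> inv j \<in> P" using cov mc by blast
      have jR: "j \<in> ?R" using j by blast
      have jX: "j \<in> X" using j XS by blast
      have jc: "j \<in> carrier G" using j by blast
      have mjR: "m \<otimes> inv j \<in> ?R" using m(1) jR subgroup.m_closed[OF sR] subgroup.m_inv_closed[OF sR] by blast
      have mjX: "m \<otimes> inv j \<notin> X"
      proof
        assume "m \<otimes> inv j \<in> X"
        then have "m \<otimes> inv j \<otimes> j \<in> X" using jX subgroup.m_closed[OF sX] by blast
        moreover have "m \<otimes> inv j \<otimes> j = m" using mc jc by (simp add: m_assoc)
        ultimately show False using m(2) by simp
      qed
      have "insert P (S - {M}) - {X} = insert P (S - {M, X})" using False by blast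
      then have "m \<otimes> inv j \<in> carrier G \<inter> \<Inter>(insert P (S - {M}) - {X})" using mjR j(2) by simp
      then show ?thesis using mjX by blast
    qed
  qed
  then have "general_position G (insert P (S - {M}))" using gp_iff[of "insert P (S - {M})" G] fin by simp
  then show ?thesis using PnS by blast
qed



context prod2 begin

definition diag :: "('a \<times> 'b) set \<Rightarrow> bool" where
  "diag X \<longleftrightarrow> \<not> typeA X \<and> \<not> typeB X"

lemma fst_hom: "group_hom G H fst"
  unfolding group_hom_def group_hom_axioms_def
  using Ggrp H.is_group by (auto intro!: homI simp: mult_DirProd')

lemma snd_hom: "group_hom G K snd"
  unfolding group_hom_def group_hom_axioms_def
  using Ggrp K.is_group by (auto intro!: homI simp: mult_DirProd')

lemma step:
  assumes solv: "solvable H \<or> solvable K" and gp: "general_position G S"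
    and all: "\<forall>X\<in>S. maximal_subgroup X G" and M: "M \<in> S" and dM: "diag M"
  shows "\<exists>S'. general_position G S' \<and> (\<forall>X\<in>S'. maximal_subgroup X G) \<and> card S' = card S
    \<and> {X\<in>S'. diag X} \<subset> {X\<in>S. diag X}"
proof -
  interpret GG: group G by (rule Ggrp)
  have Mm: "maximal_subgroup M G" using all M by blast
  have sM: "subgroup M G" using Mm unfolding maximal_subgroup_def by blast
  have nA: "\<not> typeA M" and nB: "\<not> typeB M" using dM unfolding diag_def by auto
  have dm: "maximal_subgroup (aa M) H \<and> aa M \<lhd> H \<and> maximal_subgroup (bb M) K \<and> bb M \<lhd> K"
    using diag_main[OF Mm nA nB solv] .
  have subs: "\<forall>X\<in>S. subgroup X G" using all unfolding maximal_subgroup_def by blast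
  have fin: "finite S" using gp unfolding general_position_def by blast
  let ?J = "carrier G \<inter> \<Inter>(S - {M})"
  have sJ: "subgroup ?J G" using GG.inter_sub[of "S - {M}"] subs by blast
  have JM: "\<not> ?J \<subseteq> M" using gp gp_iff[OF fin] M by blast
  let ?P = "aa M \<times> carrier K"
  let ?Q = "carrier H \<times> bb M"
  have PQ: "?P \<inter> ?Q \<subseteq> M"
  proof
    fix x assume x: "x \<in> ?P \<inter> ?Q"
    obtain h k where hk: "x = (h, k)" by (cases x)
    have h: "h \<in> carrier H" "(h, \<one>\<^bsub>K\<^esub>) \<in> M" and k: "k \<in> carrier K" "(\<one>\<^bsub>H\<^esub>, k) \<in> M"
      using x hk unfolding aa_def bb_def by auto
    have "(h, \<one>\<^bsub>K\<^esub>) \<otimes>\<^bsub>G\<^esub> (\<one>\<^bsub>H\<^esub>, k) \<in> M" using h k subgroup.m_closed[OF sM] by blast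
    then show "x \<in> M" using hk h k by simp
  qed
  have diagfin: "finite {X\<in>S. diag X}" using fin by simp
  have gen: "\<exists>S'. general_position G S' \<and> (\<forall>X\<in>S'. maximal_subgroup X G) \<and> card S' = card S
    \<and> {X\<in>S'. diag X} \<subset> {X\<in>S. diag X}"
    if mP: "maximal_subgroup P G" and tP: "\<not> diag P" and nJP: "\<not> ?J \<subseteq> P"
      and cov: "\<forall>m\<in>carrier G. \<exists>j\<in>?J. m \<otimes>\<^bsub>G\<^esub> inv\<^bsub>G\<^esub> j \<in> P" for P
  proof -
    have sP: "subgroup P G" using mP unfolding maximal_subgroup_def by blast
    have ex: "general_position G (insert P (S - {M})) \<and> P \<notin> S - {M}"
      using GG.exchange[OF gp subs M sP nJP cov] .
    let ?S' = "insert P (S - {M})"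
    have "card ?S' = card (S - {M}) + 1" using ex fin by simp
    also have "\<dots> = card S" using fin M card_Suc_Diff1 by fastforce
    finally have c: "card ?S' = card S" .
    have "\<forall>X\<in>?S'. maximal_subgroup X G" using all mP by blast
    moreover have "{X\<in>?S'. diag X} \<subset> {X\<in>S. diag X}"
    proof -
      have e: "{X\<in>?S'. diag X} = {X\<in>S. diag X} - {M}" using tP by auto
      have "M \<in> {X\<in>S. diag X}" using M dM by simp
      then show ?thesis unfolding e by blast
    qed
    ultimately show ?thesis using ex c by blast
  qed
  have "\<not> ?J \<subseteq> ?P \<or> \<not> ?J \<subseteq> ?Q" using JM PQ by blast
  then show ?thesis
  proof
    assume nJP: "\<not> ?J \<subseteq> ?P"
    have mP: "maximal_subgroup ?P G" using maxA dm by blast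
    have tP: "\<not> diag ?P" unfolding diag_def typeA_def using dm
      by (auto intro: subgroup.one_closed simp: maximal_subgroup_def)
    let ?C = "fst ` ?J"
    have sC: "subgroup ?C H" using group_hom.subgroup_img_is_subgroup[OF fst_hom sJ] .
    obtain j where j: "j \<in> ?J" "j \<notin> ?P" using nJP by blast
    have "fst j \<notin> aa M" using j by (cases j) auto
    then have nCA: "\<not> ?C \<subseteq> aa M" using j by blast
    have cov: "\<forall>m\<in>carrier G. \<exists>j\<in>?J. m \<otimes>\<^bsub>G\<^esub> inv\<^bsub>G\<^esub> j \<in> ?P"
    proof
      fix m assume m: "m \<in> carrier G"
      obtain a b where ab: "m = (a, b)" by (cases m)
      have a: "a \<in> carrier H" and b: "b \<in> carrier K" using m ab by auto
      obtain c where c: "c \<in> ?C" "a \<otimes>\<^bsub>H\<^esub> inv\<^bsub>H\<^esub> c \<in> aa M"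
        using H.cover[of "aa M" ?C a] dm sC nCA a by blast
      obtain j where j: "j \<in> ?J" "c = fst j" using c by blast
      obtain p q where pq: "j = (p, q)" by (cases j)
      have p: "p \<in> carrier H" and q: "q \<in> carrier K" using j pq by auto
      have "m \<otimes>\<^bsub>G\<^esub> inv\<^bsub>G\<^esub> j = (a \<otimes>\<^bsub>H\<^esub> inv\<^bsub>H\<^esub> p, b \<otimes>\<^bsub>K\<^esub> inv\<^bsub>K\<^esub> q)"
        using ab pq p q by simp
      moreover have "b \<otimes>\<^bsub>K\<^esub> inv\<^bsub>K\<^esub> q \<in> carrier K" using b q by simp
      ultimately have "m \<otimes>\<^bsub>G\<^esub> inv\<^bsub>G\<^esub> j \<in> ?P" using c j pq by simp
      then show "\<exists>j\<in>?J. m \<otimes>\<^bsub>G\<^esub> inv\<^bsub>G\<^esub> j \<in> ?P" using j(1) by (rule bexI)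
    qed
    show ?thesis using gen[OF mP tP nJP cov] .
  next
    assume nJQ: "\<not> ?J \<subseteq> ?Q"
    have mQ: "maximal_subgroup ?Q G" using maxB dm by blast
    have tQ: "\<not> diag ?Q" unfolding diag_def typeB_def using dm
      by (auto intro: subgroup.one_closed simp: maximal_subgroup_def)
    let ?C = "snd ` ?J"
    have sC: "subgroup ?C K" using group_hom.subgroup_img_is_subgroup[OF snd_hom sJ] .
    obtain j where j: "j \<in> ?J" "j \<notin> ?Q" using nJQ by blast
    have "snd j \<notin> bb M" using j by (cases j) auto
    then have nCA: "\<not> ?C \<subseteq> bb M" using j by blast
    have cov: "\<forall>m\<in>carrier G. \<exists>j\<in>?J. m \<otimes>\<^bsub>G\<^esub> inv\<^bsub>G\<^esub> j \<in> ?Q"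
    proof
      fix m assume m: "m \<in> carrier G"
      obtain a b where ab: "m = (a, b)" by (cases m)
      have a: "a \<in> carrier H" and b: "b \<in> carrier K" using m ab by auto
      obtain c where c: "c \<in> ?C" "b \<otimes>\<^bsub>K\<^esub> inv\<^bsub>K\<^esub> c \<in> bb M"
        using K.cover[of "bb M" ?C b] dm sC nCA b by blast
      obtain j where j: "j \<in> ?J" "c = snd j" using c by blast
      obtain p q where pq: "j = (p, q)" by (cases j)
      have p: "p \<in> carrier H" and q: "q \<in> carrier K" using j pq by auto
      have "m \<otimes>\<^bsub>G\<^esub> inv\<^bsub>G\<^esub> j = (a \<otimes>\<^bsub>H\<^esub> inv\<^bsub>H\<^esub> p, b \<otimes>\<^bsub>K\<^esub> inv\<^bsub>K\<^esub> q)"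
        using ab pq p q by simp
      moreover have "a \<otimes>\<^bsub>H\<^esub> inv\<^bsub>H\<^esub> p \<in> carrier H" using a p by simp
      ultimately have "m \<otimes>\<^bsub>G\<^esub> inv\<^bsub>G\<^esub> j \<in> ?Q" using c j pq by simp
      then show "\<exists>j\<in>?J. m \<otimes>\<^bsub>G\<^esub> inv\<^bsub>G\<^esub> j \<in> ?Q" using j(1) by (rule bexI)
    qed
    show ?thesis using gen[OF mQ tQ nJQ cov] .
  qed
qed

end


context prod2 begin

lemma reduce:
  assumes solv: "solvable H \<or> solvable K"
  shows "general_position G S \<Longrightarrow> \<forall>X\<in>S. maximal_subgroup X G \<Longrightarrow>
    \<exists>S'. general_position G S' \<and> (\<forall>X\<in>S'. maximal_subgroup X G) \<and> card S' = card S
      \<and> (\<forall>X\<in>S'. \<not> diag X)"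
proof (induction "card {X\<in>S. diag X}" arbitrary: S rule: less_induct)
  case less
  show ?case
  proof (cases "\<exists>M\<in>S. diag M")
    case False
    then show ?thesis using less.prems by blast
  next
    case True
    then obtain M where M: "M \<in> S" "diag M" by blast
    obtain S' where S': "general_position G S'" "\<forall>X\<in>S'. maximal_subgroup X G" "card S' = card S"
      "{X\<in>S'. diag X} \<subset> {X\<in>S. diag X}"
      using step[OF solv less.prems M] by blast
    have fin: "finite S" using less.prems(1) unfolding general_position_def by blast
    have "card {X\<in>S'. diag X} < card {X\<in>S. diag X}"
      using S'(4) fin by (intro psubset_card_mono) auto
    from less.hyps[OF this S'(1,2)] S'(3) show ?thesis by metis
  qed
qed

lemma upper_nodiag:
  assumes fH: "finite (carrier H)" and fK: "finite (carrier K)"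
    and gp: "general_position G S" and all: "\<forall>X\<in>S. maximal_subgroup X G"
    and nd: "\<forall>X\<in>S. \<not> diag X"
  shows "card S \<le> MaxDim H + MaxDim K"
proof -
  have fin: "finite S" using gp unfolding general_position_def by blast
  have subs: "\<forall>X\<in>S. subgroup X G" using all unfolding maximal_subgroup_def by blast
  have gpS: "\<forall>X\<in>S. \<not> carrier G \<inter> \<Inter>(S - {X}) \<subseteq> X" using gp gp_iff[OF fin] by blast
  define SA where "SA = {X\<in>S. typeA X}"
  define SB where "SB = S - SA"
  have SBt: "\<forall>X\<in>SB. typeB X" using nd unfolding SB_def SA_def diag_def by blast
  have finA: "finite SA" and finB: "finite SB" using fin unfolding SA_def SB_def by auto
  have cardS: "card S = card SA + card SB"
  proof -
    have "S = SA \<union> SB" "SA \<inter> SB = {}" unfolding SA_def SB_def by auto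
    then show ?thesis using card_Un_disjoint[OF finA finB] by simp
  qed
  have eqA: "X = aa X \<times> carrier K" if "X \<in> SA" for X
    using typeA_eq that subs unfolding SA_def by blast
  have eqB: "X = carrier H \<times> bb X" if "X \<in> SB" for X
    using typeB_eq that subs SBt unfolding SB_def by blast
  have injA: "inj_on aa SA"
  proof (rule inj_onI)
    fix X Y assume "X \<in> SA" "Y \<in> SA" "aa X = aa Y"
    then show "X = Y" using eqA by metis
  qed
  have injB: "inj_on bb SB"
  proof (rule inj_onI)
    fix X Y assume "X \<in> SB" "Y \<in> SB" "bb X = bb Y"
    then show "X = Y" using eqB by metis
  qed
  have maxA': "\<forall>A\<in>aa ` SA. maximal_subgroup A H"
    using typeA_max all unfolding SA_def by blast
  have maxB': "\<forall>B\<in>bb ` SB. maximal_subgroup B K"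
    using typeB_max all SBt unfolding SB_def by blast
  have gpA: "general_position H (aa ` SA)"
  proof -
    have "\<forall>A\<in>aa ` SA. \<not> carrier H \<inter> \<Inter>(aa ` SA - {A}) \<subseteq> A"
    proof
      fix A assume "A \<in> aa ` SA"
      then obtain X0 where X0: "X0 \<in> SA" "A = aa X0" by blast
      have X0S: "X0 \<in> S" using X0 unfolding SA_def by blast
      have "\<not> carrier G \<inter> \<Inter>(S - {X0}) \<subseteq> X0" using gpS X0S by (rule bspec)
      then obtain g where g: "g \<in> carrier G \<inter> \<Inter>(S - {X0})" "g \<notin> X0" by (meson subsetI)
      obtain a b where ab: "g = (a, b)" by (cases g)
      have a: "a \<in> carrier H" and b: "b \<in> carrier K" using g ab by auto
      have "a \<in> A'" if A': "A' \<in> aa ` SA - {A}" for A'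
      proof -
        obtain X' where X': "X' \<in> SA" "A' = aa X'" using A' by blast
        have "X' \<noteq> X0" using X' X0 A' by blast
        then have "g \<in> X'" using g X' unfolding SA_def by blast
        then have "g \<in> aa X' \<times> carrier K" using eqA[OF X'(1)] by simp
        then show ?thesis using X' ab by simp
      qed
      moreover have "a \<notin> A"
      proof
        assume "a \<in> A"
        then have "g \<in> aa X0 \<times> carrier K" using X0 ab b by simp
        then show False using g eqA[OF X0(1)] by simp
      qed
      ultimately show "\<not> carrier H \<inter> \<Inter>(aa ` SA - {A}) \<subseteq> A" using a by blast
    qed
    then show ?thesis using gp_iff[of "aa ` SA" H] finA by simp
  qed
  have gpB: "general_position K (bb ` SB)"
  proof -
    have "\<forall>A\<in>bb ` SB. \<not> carrier K \<inter> \<Inter>(bb ` SB - {A}) \<subseteq> A"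
    proof
      fix A assume "A \<in> bb ` SB"
      then obtain X0 where X0: "X0 \<in> SB" "A = bb X0" by blast
      have X0S: "X0 \<in> S" using X0 unfolding SB_def by blast
      have "\<not> carrier G \<inter> \<Inter>(S - {X0}) \<subseteq> X0" using gpS X0S by (rule bspec)
      then obtain g where g: "g \<in> carrier G \<inter> \<Inter>(S - {X0})" "g \<notin> X0" by (meson subsetI)
      obtain a b where ab: "g = (a, b)" by (cases g)
      have a: "a \<in> carrier H" and b: "b \<in> carrier K" using g ab by auto
      have "b \<in> A'" if A': "A' \<in> bb ` SB - {A}" for A'
      proof -
        obtain X' where X': "X' \<in> SB" "A' = bb X'" using A' by blast
        have "X' \<noteq> X0" using X' X0 A' by blast
        then have "g \<in> X'" using g X' unfolding SB_def by blast
        then have "g \<in> carrier H \<times> bb X'" using eqB[OF X'(1)] by simp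
        then show ?thesis using X' ab by simp
      qed
      moreover have "b \<notin> A"
      proof
        assume "b \<in> A"
        then have "g \<in> carrier H \<times> bb X0" using X0 ab a by simp
        then show False using g eqB[OF X0(1)] by simp
      qed
      ultimately show "\<not> carrier K \<inter> \<Inter>(bb ` SB - {A}) \<subseteq> A" using b by blast
    qed
    then show ?thesis using gp_iff[of "bb ` SB" K] finB by simp
  qed
  have "card SA \<le> MaxDim H"
    using MaxDim_ge[OF fH maxA' gpA] card_image[OF injA] by simp
  moreover have "card SB \<le> MaxDim K"
    using MaxDim_ge[OF fK maxB' gpB] card_image[OF injB] by simp
  ultimately show ?thesis using cardS by simp
qed

end


context prod2 begin

lemma lower:
  assumes fH: "finite (carrier H)" and fK: "finite (carrier K)"
  shows "MaxDim H + MaxDim K \<le> MaxDim G"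
proof -
  obtain SH where SH: "\<forall>M\<in>SH. maximal_subgroup M H" "general_position H SH" "card SH = MaxDim H"
    using MaxDim_attained[OF fH] by blast
  obtain SK where SK: "\<forall>M\<in>SK. maximal_subgroup M K" "general_position K SK" "card SK = MaxDim K"
    using MaxDim_attained[OF fK] by blast
  have finH: "finite SH" using SH(2) unfolding general_position_def by blast
  have finK: "finite SK" using SK(2) unfolding general_position_def by blast
  have gpH: "\<forall>X\<in>SH. \<not> carrier H \<inter> \<Inter>(SH - {X}) \<subseteq> X" using SH(2) gp_iff[OF finH] by blast
  have gpK: "\<forall>X\<in>SK. \<not> carrier K \<inter> \<Inter>(SK - {X}) \<subseteq> X" using SK(2) gp_iff[OF finK] by blast
  have subH: "\<And>A. A \<in> SH \<Longrightarrow> subgroup A H" and propH: "\<And>A. A \<in> SH \<Longrightarrow> A \<noteq> carrier H"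
    using SH(1) unfolding maximal_subgroup_def by blast+
  have subK: "\<And>B. B \<in> SK \<Longrightarrow> subgroup B K" and propK: "\<And>B. B \<in> SK \<Longrightarrow> B \<noteq> carrier K"
    using SK(1) unfolding maximal_subgroup_def by blast+
  define fA where "fA = (\<lambda>A::'a set. A \<times> carrier K)"
  define fB where "fB = (\<lambda>B::'b set. carrier H \<times> B)"
  define S where "S = fA ` SH \<union> fB ` SK"
  have injA: "inj_on fA SH"
    unfolding fA_def by (rule inj_onI) (erule times_cancel2, rule K.one_closed)
  have injB: "inj_on fB SK"
    unfolding fB_def by (rule inj_onI) (erule times_cancel1, rule H.one_closed)
  have disj: "fA ` SH \<inter> fB ` SK = {}"
  proof (rule ccontr)
    assume "fA ` SH \<inter> fB ` SK \<noteq> {}"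
    then obtain A B where AB: "A \<in> SH" "B \<in> SK" "A \<times> carrier K = carrier H \<times> B"
      unfolding fA_def fB_def by blast
    have "carrier H \<subseteq> A"
    proof
      fix h assume h: "h \<in> carrier H"
      have "\<one>\<^bsub>K\<^esub> \<in> B" using subK[OF AB(2)] subgroup.one_closed by blast
      then have "(h, \<one>\<^bsub>K\<^esub>) \<in> A \<times> carrier K" using AB(3) h by simp
      then show "h \<in> A" by simp
    qed
    then show False using propH[OF AB(1)] subgroup.subset[OF subH[OF AB(1)]] by blast
  qed
  have finS: "finite S" unfolding S_def using finH finK by simp
  have cardS: "card S = MaxDim H + MaxDim K"
    unfolding S_def using card_Un_disjoint[OF finite_imageI[OF finH] finite_imageI[OF finK] disj]
      card_image[OF injA] card_image[OF injB] SH(3) SK(3) by simp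
  have allS: "\<forall>X\<in>S. maximal_subgroup X G"
    unfolding S_def fA_def fB_def using SH(1) SK(1) maxA maxB by blast
  have "\<forall>X\<in>S. \<not> carrier G \<inter> \<Inter>(S - {X}) \<subseteq> X"
  proof
    fix X assume X: "X \<in> S"
    show "\<not> carrier G \<inter> \<Inter>(S - {X}) \<subseteq> X"
    proof (cases "X \<in> fA ` SH")
      case True
      then obtain A0 where A0: "A0 \<in> SH" "X = A0 \<times> carrier K" unfolding fA_def by blast
      have "\<not> carrier H \<inter> \<Inter>(SH - {A0}) \<subseteq> A0" using gpH A0(1) by (rule bspec)
      then obtain h where h: "h \<in> carrier H \<inter> \<Inter>(SH - {A0})" "h \<notin> A0" by (meson subsetI)
      have "(h, \<one>\<^bsub>K\<^esub>) \<in> Y" if Y: "Y \<in> S - {X}" for Y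
      proof -
        from Y have "Y \<in> fA ` SH \<or> Y \<in> fB ` SK" unfolding S_def by blast
        then show ?thesis
        proof
          assume "Y \<in> fA ` SH"
          then obtain A where A: "A \<in> SH" "Y = A \<times> carrier K" unfolding fA_def by blast
          have "A \<noteq> A0" using A A0 Y by blast
          then have "h \<in> A" using h A by blast
          then show ?thesis using A by simp
        next
          assume "Y \<in> fB ` SK"
          then obtain B where B: "B \<in> SK" "Y = carrier H \<times> B" unfolding fB_def by blast
          have "\<one>\<^bsub>K\<^esub> \<in> B" using subK[OF B(1)] subgroup.one_closed by blast
          then show ?thesis using B h by simp
        qed
      qed
      moreover have "(h, \<one>\<^bsub>K\<^esub>) \<in> carrier G" using h by simp
      moreover have "(h, \<one>\<^bsub>K\<^esub>) \<notin> X" using h A0 by simp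
      ultimately show ?thesis by blast
    next
      case False
      then have "X \<in> fB ` SK" using X unfolding S_def by blast
      then obtain B0 where B0: "B0 \<in> SK" "X = carrier H \<times> B0" unfolding fB_def by blast
      have "\<not> carrier K \<inter> \<Inter>(SK - {B0}) \<subseteq> B0" using gpK B0(1) by (rule bspec)
      then obtain k where k: "k \<in> carrier K \<inter> \<Inter>(SK - {B0})" "k \<notin> B0" by (meson subsetI)
      have "(\<one>\<^bsub>H\<^esub>, k) \<in> Y" if Y: "Y \<in> S - {X}" for Y
      proof -
        from Y have "Y \<in> fA ` SH \<or> Y \<in> fB ` SK" unfolding S_def by blast
        then show ?thesis
        proof
          assume "Y \<in> fB ` SK"
          then obtain B where B: "B \<in> SK" "Y = carrier H \<times> B" unfolding fB_def by blast
          have "B \<noteq> B0" using B B0 Y by blast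
          then have "k \<in> B" using k B by blast
          then show ?thesis using B by simp
        next
          assume "Y \<in> fA ` SH"
          then obtain A where A: "A \<in> SH" "Y = A \<times> carrier K" unfolding fA_def by blast
          have "\<one>\<^bsub>H\<^esub> \<in> A" using subH[OF A(1)] subgroup.one_closed by blast
          then show ?thesis using A k by simp
        qed
      qed
      moreover have "(\<one>\<^bsub>H\<^esub>, k) \<in> carrier G" using k by simp
      moreover have "(\<one>\<^bsub>H\<^esub>, k) \<notin> X" using k B0 by simp
      ultimately show ?thesis by blast
    qed
  qed
  then have gpS: "general_position G S" by (rule iffD2[OF gp_iff[OF finS]])
  have fG: "finite (carrier G)" using fH fK by simp
  show ?thesis using MaxDim_ge[OF fG allS gpS] cardS by simp
qed

lemma upper:
  assumes fH: "finite (carrier H)" and fK: "finite (carrier K)" and solv: "solvable H \<or> solvable K"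
  shows "MaxDim G \<le> MaxDim H + MaxDim K"
proof -
  have fG: "finite (carrier G)" using fH fK by simp
  obtain S where S: "\<forall>M\<in>S. maximal_subgroup M G" "general_position G S" "card S = MaxDim G"
    using MaxDim_attained[OF fG] by blast
  obtain S' where S': "general_position G S'" "\<forall>X\<in>S'. maximal_subgroup X G" "card S' = card S"
    "\<forall>X\<in>S'. \<not> diag X"
    using reduce[OF solv S(2,1)] by blast
  show ?thesis using upper_nodiag[OF fH fK S'(1,2,4)] S'(3) S(3) by simp
qed

end

theorem corollary2p4:
  fixes H :: "('a, 'c) monoid_scheme" and K :: "('b, 'd) monoid_scheme"
  assumes "group H" and "group K"
    and "finite (carrier H)" and "finite (carrier K)"
    and "solvable H \<or> solvable K"
  shows "MaxDim (H \<times>\<times> K) = MaxDim H + MaxDim K"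
proof -
  interpret prod2 H K unfolding prod2_def using assms(1,2) by blast
  show ?thesis using lower[OF assms(3,4)] upper[OF assms(3,4,5)] by simp
qed


end
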